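(* For every $h\in H$ there exists a unique decomposition $$f_h(\mathbf t_{\mathcal N})=P^+_h(\mathbf t_{\mathcal N})+f^{neg}_h(\mathbf t_{\mathcal N}),$$ where $P^+_h(\mathbf t_{\mathcal N})=\sum_{\beta\in\mathcal B_h}p_\beta\mathbf t_{\mathcal N}^{\beta}$ is a finite sum of monomials (with rational exponents $\beta\in\bigoplus_{n\in\mathcal N}\mathbb Q E_n$) such that every exponent satisfies $\beta\not<0$, and $f^{neg}_h(\mathbf t_{\mathcal N})=R_h(\mathbf t_{\mathcal N})/\prod_{n\in\mathcal N}(1-\mathbf t_{\mathcal N}^{a_n})$ is a rational function having negative degree in $t_n$ for every $n\in\mathcal N$.
   Context: Let $\Gamma$ be a connected plumbing graph which is a tree, all of whose vertices have genus $0$ and an integer decoration $e_v$, such that the intersection matrix $I$ ($I_{vv}=e_v$, $I_{vw}=1$ if $v,w$ are adjacent, $0$ otherwise) is negative definite. Let $\mathcal V$ be its vertex set, $\delta_v$ the valency of $v$, and $\mathcal N=\{v:\delta_v\ge 3\}$ the set of nodes (assumed nonempty). Let $L=\bigoplus_v\mathbb Z E_v$ with the form given by $I$, $L'=\{l'\in L\otimes\mathbb Q:(l',E_v)\in\mathbb Z\ \forall v\}$ with basis $E_v^*$ defined by $(E_v^*,E_w)=-\delta_{vw}$, $H=L'/L$ and $[l']$ the class of $l'$. For $l'=\sum l_vE_v\in L\otimes\mathbb Q$ put $\mathbf t^{l'}=\prod_v t_v^{l_v}$. The zeta-function is $f(\mathbf t)=\prod_{v}(1-\mathbf t^{E_v^*})^{\delta_v-2}$;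 let $Z(\mathbf t)=\sum_{l'\in L'}p_{l'}\mathbf t^{l'}$ be its Taylor expansion at the origin, $Z_h=\sum_{[l']=h}p_{l'}\mathbf t^{l'}$ for $h\in H$, and $f_h(\mathbf t)$ the rational function whose expansion is $Z_h$ (so $f=\sum_h f_h$). Let $\pi_{\mathcal N}:L\otimes\mathbb Q\to\bigoplus_{n\in\mathcal N}\mathbb QE_n$ be the projection forgetting the coordinates of non-nodes, and $\mathbf t_{\mathcal N}^x:=\prod_{n\in\mathcal N}t_n^{x_n}$ where $x_n$ are the coordinates of $\pi_{\mathcal N}(x)$. The reduced zeta-function is $f_h(\mathbf t_{\mathcal N}):=f_h(\mathbf t)|_{t_v=1,\,v\notin\mathcal N}$. It is known that $f_h(\mathbf t_{\mathcal N})=\mathbf t_{\mathcal N}^{r_h}\sum_\ell b_\ell\mathbf t_{\mathcal N}^{\ell}/\prod_{n\in\mathcal N}(1-\mathbf t_{\mathcal N}^{a_n})$ (finite sum, $b_\ell\in\mathbb Z$), where $a_n=\lambda_n\pi_{\mathcal N}(E_n^* )$ with $\lambda_n>0$; all coordinates of $\pi_{\mathcal N}(E_n^* )$ are positive. A rational function $R/\prod_{n}(1-\mathbf t_{\mathcal N}^{a_n})$, with $R$ a finite sum of monomials with rational exponents, has negative degree in $t_n$ if every monomial of $R$ has $t_n$-exponent strictly smaller than the $t_n$-exponent of $\mathbf t_{\mathcal N}^{\sum_{n'}a_{n'}}$. For $\beta=\sum_{n\in\mathcal N}\beta_nE_n$ we write $\beta<0$ if $\beta_n<0$ for all $n$,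 and $\beta\not<0$ otherwise. *)

theory Defs
  imports Complex_Main "HOL-Analysis.Infinite_Sum"
begin

text \<open>Plumbing graph on the finite vertex type 'v, given by an adjacency relation
  adj and integer decorations e (all genera are 0, so no genus data is needed).\<close>

definition valency :: "('v::finite \<Rightarrow> 'v \<Rightarrow> bool) \<Rightarrow> 'v \<Rightarrow> nat" where
  "valency adj v = card {w. adj v w}"

definition nodes :: "('v::finite \<Rightarrow> 'v \<Rightarrow> bool) \<Rightarrow> 'v set" where
  "nodes adj = {v. valency adj v \<ge> 3}"

definition is_tree :: "('v::finite \<Rightarrow> 'v \<Rightarrow> bool) \<Rightarrow> bool" where
  "is_tree adj \<longleftrightarrow> (\<forall>u w. adj u w \<longrightarrow> adj w u) \<and> (\<forall>u. \<not> adj u u)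
     \<and> (\<forall>u w. adj\<^sup>*\<^sup>* u w)
     \<and> card {{u, w} | u w. adj u w} = card (UNIV :: 'v set) - 1"

definition imat :: "('v::finite \<Rightarrow> 'v \<Rightarrow> bool) \<Rightarrow> ('v \<Rightarrow> int) \<Rightarrow> 'v \<Rightarrow> 'v \<Rightarrow> int" where
  "imat adj e v w = (if v = w then e v else if adj v w then 1 else 0)"

definition neg_definite :: "('v::finite \<Rightarrow> 'v \<Rightarrow> bool) \<Rightarrow> ('v \<Rightarrow> int) \<Rightarrow> bool" where
  "neg_definite adj e \<longleftrightarrow>
     (\<forall>x :: 'v \<Rightarrow> real. x \<noteq> (\<lambda>_. 0) \<longrightarrow> (\<Sum>v\<in>UNIV. \<Sum>w\<in>UNIV. x v * of_int (imat adj e v w) * x w) < 0)"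

text \<open>The bilinear form on L \<otimes> Q; vectors are coordinate functions 'v \<Rightarrow> rat
  w.r.t. the basis E_v.\<close>
definition bform :: "('v::finite \<Rightarrow> 'v \<Rightarrow> bool) \<Rightarrow> ('v \<Rightarrow> int) \<Rightarrow> ('v \<Rightarrow> rat) \<Rightarrow> ('v \<Rightarrow> rat) \<Rightarrow> rat" where
  "bform adj e x y = (\<Sum>v\<in>UNIV. \<Sum>w\<in>UNIV. x v * of_int (imat adj e v w) * y w)"

definition Ebas :: "'v \<Rightarrow> 'v \<Rightarrow> rat" where
  "Ebas v = (\<lambda>w. if w = v then 1 else 0)"

definition Lat :: "('v \<Rightarrow> rat) set" where
  "Lat = {x. \<forall>v. x v \<in> \<int>}"

definition Ldual :: "('v::finite \<Rightarrow> 'v \<Rightarrow> bool) \<Rightarrow> ('v \<Rightarrow> int) \<Rightarrow> ('v \<Rightarrow> rat) set" where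
  "Ldual adj e = {x. \<forall>v. bform adj e x (Ebas v) \<in> \<int>}"

definition Hgrp :: "('v::finite \<Rightarrow> 'v \<Rightarrow> bool) \<Rightarrow> ('v \<Rightarrow> int) \<Rightarrow> ('v \<Rightarrow> rat) set set" where
  "Hgrp adj e = Ldual adj e // {(x, y). x \<in> Ldual adj e \<and> y \<in> Ldual adj e \<and> x - y \<in> Lat}"

definition Estar :: "('v::finite \<Rightarrow> 'v \<Rightarrow> bool) \<Rightarrow> ('v \<Rightarrow> int) \<Rightarrow> 'v \<Rightarrow> 'v \<Rightarrow> rat" where
  "Estar adj e v = (THE x. \<forall>w. bform adj e x (Ebas w) = - (if w = v then 1 else 0))"

text \<open>Coefficient p_{l'} of the Taylor expansion at the origin of
  f(t) = prod_v (1 - t^{E_v^*})^{delta_v - 2}: the coefficient of X^j in (1-X)^m is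
  (-1)^j (m gchoose j).\<close>
definition zcoeff :: "('v::finite \<Rightarrow> 'v \<Rightarrow> bool) \<Rightarrow> ('v \<Rightarrow> int) \<Rightarrow> ('v \<Rightarrow> rat) \<Rightarrow> real" where
  "zcoeff adj e l =
     (\<Sum>j\<in>{j :: 'v \<Rightarrow> nat. (\<lambda>w. \<Sum>v\<in>UNIV. of_nat (j v) * Estar adj e v w) = l}.
        \<Prod>v\<in>UNIV. (-1) ^ j v * (real_of_int (int (valency adj v) - 2) gchoose j v))"

definition monN :: "'v set \<Rightarrow> ('v \<Rightarrow> real) \<Rightarrow> ('v \<Rightarrow> rat) \<Rightarrow> real" where
  "monN N t x = (\<Prod>n\<in>N. t n powr real_of_rat (x n))"

text \<open>Reduced zeta function f_h(t_N), evaluated for t_N in (0,1)^N as the (absolutely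
  convergent) series Z_h with t_v = 1 for all non-nodes.\<close>
definition fred :: "('v::finite \<Rightarrow> 'v \<Rightarrow> bool) \<Rightarrow> ('v \<Rightarrow> int) \<Rightarrow> ('v \<Rightarrow> rat) set \<Rightarrow> ('v \<Rightarrow> real) \<Rightarrow> real" where
  "fred adj e h t = (\<Sum>\<^sub>\<infinity>l\<in>h. zcoeff adj e l * monN (nodes adj) t l)"

definition avec :: "('v::finite \<Rightarrow> 'v \<Rightarrow> bool) \<Rightarrow> ('v \<Rightarrow> int) \<Rightarrow> ('v \<Rightarrow> rat) \<Rightarrow> 'v \<Rightarrow> 'v \<Rightarrow> rat" where
  "avec adj e lam n = (\<lambda>w. if w \<in> nodes adj then lam n * Estar adj e n w else 0)"

definition nodebox :: "'v set \<Rightarrow> ('v \<Rightarrow> real) set" where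
  "nodebox N = {t. \<forall>n\<in>N. 0 < t n \<and> t n < 1}"

end

theory Submission
  imports Defs "HOL-Analysis.Cartesian_Space" "HOL-Library.Function_Algebras"
begin

lemma bform_Ebas:
  "bform adj e x (Ebas w) = (\<Sum>v\<in>UNIV. x v * of_int (imat adj e v w))"
  unfolding bform_def Ebas_def
  by (simp add: if_distrib cong: if_cong)

lemma T_inj0:
  fixes z :: "'v::finite \<Rightarrow> rat"
  assumes nd: "neg_definite adj e"
    and z: "\<forall>w. (\<Sum>u\<in>UNIV. z u * of_int (imat adj e u w)) = 0"
  shows "z = (\<lambda>_. 0)"
proof (rule ccontr)
  assume nz: "z \<noteq> (\<lambda>_. 0)"
  define x where "x = (\<lambda>u. real_of_rat (z u))"
  have "x \<noteq> (\<lambda>_. 0)" using nz unfolding x_def by (auto simp: fun_eq_iff)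
  then have lt: "(\<Sum>v\<in>UNIV. \<Sum>w\<in>UNIV. x v * of_int (imat adj e v w) * x w) < 0"
    using nd unfolding neg_definite_def by blast
  have "(\<Sum>v\<in>UNIV. \<Sum>w\<in>UNIV. x v * of_int (imat adj e v w) * x w)
      = (\<Sum>w\<in>UNIV. (\<Sum>v\<in>UNIV. x v * of_int (imat adj e v w)) * x w)"
    by (subst sum.swap) (simp add: sum_distrib_right)
  also have "\<dots> = (\<Sum>w\<in>UNIV. real_of_rat (\<Sum>v\<in>UNIV. z v * of_int (imat adj e v w)) * x w)"
    unfolding x_def by (simp add: of_rat_sum of_rat_mult)
  also have "\<dots> = 0" using z by simp
  finally show False using lt by simp
qed

lemma Estar_eq:
  fixes adj :: "'v::finite \<Rightarrow> 'v \<Rightarrow> bool"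
  assumes nd: "neg_definite adj e"
  shows "bform adj e (Estar adj e v) (Ebas w) = - (if w = v then 1 else 0)"
proof -
  define M :: "rat^'v^'v" where "M = (\<chi> w u. of_int (imat adj e u w))"
  have Mv: "(M *v x) $ w = (\<Sum>u\<in>UNIV. x $ u * of_int (imat adj e u w))" for x w
    unfolding M_def matrix_vector_mult_def by (simp add: mult.commute)
  have inj: "inj ((*v) M)"
  proof (rule injI)
    fix x y assume "M *v x = M *v y"
    then have "M *v (x - y) = 0" by (simp add: matrix_vector_mult_diff_distrib)
    then have "\<forall>w. (\<Sum>u\<in>UNIV. (\<lambda>u. (x - y) $ u) u * of_int (imat adj e u w)) = 0"
      using Mv by (metis zero_index)
    from T_inj0[OF nd this] show "x = y"
      by (metis (mono_tags) eq_iff_diff_eq_0 vec_eq_iff vector_minus_component)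
  qed
  have "surj ((*v) M)"
    by (rule vec.linear_inj_imp_surj[OF matrix_vector_mul_linear_gen inj])
  then obtain x where x: "M *v x = (\<chi> w. - (if w = v then 1 else 0))"
    by (metis surjD)
  let ?P = "\<lambda>y::'v\<Rightarrow>rat. \<forall>w. bform adj e y (Ebas w) = - (if w = v then 1 else 0)"
  have Px: "?P (\<lambda>u. x $ u)"
    using arg_cong[OF x, of "\<lambda>z. z $ w" for w] by (simp add: bform_Ebas Mv)
  have uniq: "y = (\<lambda>u. x $ u)" if "?P y" for y
  proof -
    have "\<forall>w. (\<Sum>u\<in>UNIV. (y u - x $ u) * of_int (imat adj e u w)) = 0"
      using that Px by (simp add: bform_Ebas left_diff_distrib sum_subtractf)
    from T_inj0[OF nd this] show ?thesis by (auto simp: fun_eq_iff)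
  qed
  have "?P (Estar adj e v)"
    unfolding Estar_def by (rule theI[of ?P, OF Px uniq])
  then show ?thesis by blast
qed

lemma Estar_pos:
  fixes adj :: "'v::finite \<Rightarrow> 'v \<Rightarrow> bool"
  assumes tree: "is_tree adj" and nd: "neg_definite adj e"
  shows "Estar adj e v w > 0"
proof -
  define X where "X = (\<lambda>u. real_of_rat (Estar adj e v u))"
  define I where "I = (\<lambda>u w. real_of_int (imat adj e u w))"
  have eq: "(\<Sum>u\<in>UNIV. X u * I u w) = - (if w = v then 1 else 0)" for w
  proof -
    have "real_of_rat (bform adj e (Estar adj e v) (Ebas w)) = - (if w = v then 1 else 0)"
      using Estar_eq[OF nd] by simp
    then show ?thesis unfolding bform_Ebas X_def I_def by (simp add: of_rat_sum of_rat_mult)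
  qed
  have Ioff: "u \<noteq> w \<Longrightarrow> I u w \<ge> 0" for u w unfolding I_def imat_def by auto
  define z where "z = (\<lambda>u. max (- X u) 0)"
  define p where "p = (\<lambda>u. max (X u) 0)"
  have Xpz: "X u = p u - z u" for u unfolding p_def z_def by auto
  have z0: "z u \<ge> 0" for u unfolding z_def by auto
  have p0: "p u \<ge> 0" for u unfolding p_def by auto
  have zp: "z u * p u = 0" for u unfolding p_def z_def by auto
  have nonneg: "X u \<ge> 0" for u
  proof (rule ccontr)
    assume "\<not> X u \<ge> 0"
    then have "z \<noteq> (\<lambda>_. 0)" unfolding z_def by (auto simp: fun_eq_iff intro!: exI[of _ u])
    then have lt: "(\<Sum>a\<in>UNIV. \<Sum>b\<in>UNIV. z a * I a b * z b) < 0"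
      using nd unfolding neg_definite_def I_def by blast
    have A: "(\<Sum>w\<in>UNIV. z w * (\<Sum>u\<in>UNIV. X u * I u w)) = - z v"
      by (simp add: eq if_distrib cong: if_cong)
    have B: "(\<Sum>w\<in>UNIV. z w * (\<Sum>u\<in>UNIV. X u * I u w))
       = (\<Sum>w\<in>UNIV. \<Sum>u\<in>UNIV. z w * p u * I u w) - (\<Sum>w\<in>UNIV. \<Sum>u\<in>UNIV. z w * z u * I u w)"
      by (simp add: Xpz sum_distrib_left algebra_simps sum_subtractf)
    have C: "(\<Sum>w\<in>UNIV. \<Sum>u\<in>UNIV. z w * p u * I u w) \<ge> 0"
    proof (intro sum_nonneg)
      fix w u
      show "z w * p u * I u w \<ge> 0"
      proof (cases "u = w")
        case True then show ?thesis using zp[of w] by (metis mult_eq_0_iff order_refl)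
      next
        case False then show ?thesis using Ioff[OF False] z0 p0 by simp
      qed
    qed
    have D: "(\<Sum>w\<in>UNIV. \<Sum>u\<in>UNIV. z w * z u * I u w) = (\<Sum>a\<in>UNIV. \<Sum>b\<in>UNIV. z a * I a b * z b)"
      by (subst sum.swap) (simp add: mult_ac)
    have "- z v \<ge> - (\<Sum>a\<in>UNIV. \<Sum>b\<in>UNIV. z a * I a b * z b)"
      using A B C D by linarith
    then show False using lt z0[of v] by linarith
  qed
  have sym: "adj a b \<Longrightarrow> adj b a" for a b using tree unfolding is_tree_def by blast
  have irr: "\<not> adj a a" for a using tree unfolding is_tree_def by blast
  have conn: "adj\<^sup>*\<^sup>* a b" for a b using tree unfolding is_tree_def by blast
  have eq2: "e w * X w + (\<Sum>u\<in>{u. adj u w}. X u) = - (if w = v then 1 else 0)" for w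
  proof -
    have "(\<Sum>u\<in>UNIV. X u * I u w) = (\<Sum>u\<in>UNIV. (if u = w then e w * X w else 0) + (if adj u w then X u else 0))"
      by (rule sum.cong) (auto simp: I_def imat_def irr)
    also have "\<dots> = e w * X w + (\<Sum>u\<in>{u. adj u w}. X u)"
      by (simp add: sum.distrib sum.If_cases)
    finally show ?thesis using eq[of w] by simp
  qed
  have step: "X a = 0 \<Longrightarrow> adj a b \<Longrightarrow> X b = 0" for a b
  proof -
    assume a: "X a = 0" and ab: "adj a b"
    have s: "(\<Sum>u\<in>{u. adj u a}. X u) = - (if a = v then 1 else 0)" using eq2[of a] a by simp
    have "(\<Sum>u\<in>{u. adj u a}. X u) \<ge> 0" by (rule sum_nonneg) (use nonneg in auto)
    with s have "a \<noteq> v" by (auto split: if_splits)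
    with s have "(\<Sum>u\<in>{u. adj u a}. X u) = 0" by simp
    then have "\<forall>u\<in>{u. adj u a}. X u = 0"
      by (subst (asm) sum_nonneg_eq_0_iff) (use nonneg in auto)
    then show "X b = 0" using sym[OF ab] by auto
  qed
  show ?thesis
  proof (rule ccontr)
    assume "\<not> Estar adj e v w > 0"
    then have "X w = 0" using nonneg[of w] unfolding X_def by (simp add: not_less)
    have "X u = 0" if "adj\<^sup>*\<^sup>* w u" for u
      using that by (induction rule: rtranclp_induct) (use \<open>X w = 0\<close> step in auto)
    then have "X v = 0" using conn by blast
    have "(\<Sum>u\<in>{u. adj u v}. X u) \<ge> 0" by (rule sum_nonneg) (use nonneg in auto)
    then show False using eq2[of v] \<open>X v = 0\<close> by simp
  qed
qed

lemma powr_at_right0: "c > 0 \<Longrightarrow> ((\<lambda>u::real. u powr c) \<longlongrightarrow> 0) (at_right 0)"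
  apply (rule tendsto_zero_powrI[OF _ tendsto_const])
  apply (rule tendsto_ident_at)
  using eventually_at_right_less[of "0::real"] apply (rule eventually_mono) apply simp
  apply simp
  done

lemma ev01: "eventually (\<lambda>u. u < 1 \<and> u > 0) (at_right (0::real))"
  unfolding eventually_at_right_field by (rule exI[of _ 1]) auto

lemma powr_indep:
  fixes X :: "real set"
  assumes "finite X" "\<forall>u. 0 < u \<longrightarrow> u < 1 \<longrightarrow> (\<Sum>x\<in>X. g x * u powr x) = 0"
  shows "\<forall>x\<in>X. g x = 0"
  using assms
proof (induction "card X" arbitrary: X rule: less_induct)
  case less
  show ?case
  proof (cases "X = {}")
    case True then show ?thesis by simp
  next
    case False
    define x0 where "x0 = Min X"
    have x0X: "x0 \<in> X" using False less.prems(1) unfolding x0_def by simp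
    have x0le: "x \<in> X \<Longrightarrow> x0 \<le> x" for x using less.prems(1) unfolding x0_def by simp
    define h where "h = (\<lambda>u. \<Sum>x\<in>X. g x * u powr (x - x0))"
    have ev: "eventually (\<lambda>u. h u = 0) (at_right 0)"
      using ev01
    proof (rule eventually_mono)
      fix u :: real assume u: "u < 1 \<and> u > 0"
      have "h u = (\<Sum>x\<in>X. g x * u powr x / u powr x0)"
        unfolding h_def by (simp add: powr_diff)
      also have "\<dots> = (\<Sum>x\<in>X. g x * u powr x) / u powr x0"
        by (rule sum_divide_distrib[symmetric])
      finally have "h u = (\<Sum>x\<in>X. g x * u powr x) / u powr x0" .
      then show "h u = 0" using less.prems(2) u by simp
    qed
    have lim: "(h \<longlongrightarrow> (\<Sum>x\<in>X. if x = x0 then g x else 0)) (at_right 0)"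
      unfolding h_def
    proof (rule tendsto_sum)
      fix x assume xX: "x \<in> X"
      show "((\<lambda>u. g x * u powr (x - x0)) \<longlongrightarrow> (if x = x0 then g x else 0)) (at_right 0)"
      proof (cases "x = x0")
        case True
        have "eventually (\<lambda>u. g x = g x * u powr (x - x0)) (at_right (0::real))"
          using eventually_at_right_less[of "0::real"] by (rule eventually_mono) (simp add: True)
        from Lim_transform_eventually[OF tendsto_const this] show ?thesis using True by simp
      next
        case False
        then have pos: "x - x0 > 0" using x0le[OF xX] by simp
        have "((\<lambda>u::real. g x * u powr (x - x0)) \<longlongrightarrow> g x * 0) (at_right 0)"
          by (rule tendsto_mult[OF tendsto_const powr_at_right0[OF pos]])
        then show ?thesis using False by simp
      qed
    qed
    have "(\<Sum>x\<in>X. if x = x0 then g x else 0) = g x0" using x0X less.prems(1) by (simp add: sum.delta)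
    with lim have lim2: "(h \<longlongrightarrow> g x0) (at_right 0)" by simp
    have "((\<lambda>_::real. 0::real) \<longlongrightarrow> g x0) (at_right 0)"
      using lim2 tendsto_cong[OF ev] by simp
    then have g0: "g x0 = 0" by (simp add: tendsto_const_iff)
    have "\<forall>x\<in>X - {x0}. g x = 0"
    proof (rule less.hyps)
      show "card (X - {x0}) < card X" using x0X less.prems(1) card_gt_0_iff by (metis card_Diff1_less)
      show "finite (X - {x0})" using less.prems(1) by simp
      show "\<forall>u. 0 < u \<longrightarrow> u < 1 \<longrightarrow> (\<Sum>x\<in>X - {x0}. g x * u powr x) = 0"
      proof (intro allI impI)
        fix u :: real assume "0 < u" "u < 1"
        then have "(\<Sum>x\<in>X. g x * u powr x) = 0" using less.prems(2) by blast
        moreover have "(\<Sum>x\<in>X. g x * u powr x) = g x0 * u powr x0 + (\<Sum>x\<in>X - {x0}. g x * u powr x)"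
          by (rule sum.remove[OF less.prems(1) x0X])
        ultimately show "(\<Sum>x\<in>X - {x0}. g x * u powr x) = 0" using g0 by simp
      qed
    qed
    then show ?thesis using g0 by auto
  qed
qed


lemma sum_group_powr:
  fixes e :: "'i \<Rightarrow> real"
  assumes "finite I"
  shows "(\<Sum>i\<in>I. c i * u powr e i) = (\<Sum>x\<in>e ` I. (\<Sum>i\<in>{i\<in>I. e i = x}. c i) * u powr x)"
proof -
  have "(\<Sum>i\<in>I. c i * u powr e i) = (\<Sum>x\<in>e ` I. \<Sum>i\<in>{i\<in>I. e i = x}. c i * u powr e i)"
    by (rule sum.image_gen[OF assms])
  also have "\<dots> = (\<Sum>x\<in>e ` I. (\<Sum>i\<in>{i\<in>I. e i = x}. c i) * u powr x)"
    unfolding sum_distrib_right by (rule sum.cong) auto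
  finally show ?thesis .
qed

lemma powr_indep_idx:
  fixes e :: "'i \<Rightarrow> real"
  assumes "finite I" "\<forall>u. 0 < u \<longrightarrow> u < 1 \<longrightarrow> (\<Sum>i\<in>I. c i * u powr e i) = 0" "u > 0"
  shows "(\<Sum>i\<in>I. c i * u powr e i) = 0"
proof -
  have h: "\<forall>u. 0 < u \<longrightarrow> u < 1 \<longrightarrow> (\<Sum>x\<in>e ` I. (\<Sum>i\<in>{i\<in>I. e i = x}. c i) * u powr x) = 0"
  proof (intro allI impI)
    fix u :: real assume "0 < u" "u < 1"
    then have "(\<Sum>i\<in>I. c i * u powr e i) = 0" using assms(2) by blast
    then show "(\<Sum>x\<in>e ` I. (\<Sum>i\<in>{i\<in>I. e i = x}. c i) * u powr x) = 0"
      by (simp only: sum_group_powr[OF assms(1)])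
  qed
  have "\<forall>x\<in>e ` I. (\<Sum>i\<in>{i\<in>I. e i = x}. c i) = 0"
    by (rule powr_indep[OF _ h]) (use assms(1) in simp)
  then show ?thesis unfolding sum_group_powr[OF assms(1)] by (intro sum.neutral) auto
qed

definition gp :: "(real \<Rightarrow> real) \<Rightarrow> bool" where
  "gp f \<longleftrightarrow> (\<exists>L::(real \<times> real) list. \<forall>u>0. f u = (\<Sum>p\<leftarrow>L. fst p * u powr snd p))"

lemma gp_zero_ext:
  assumes "gp f" "\<forall>u. 0 < u \<longrightarrow> u < 1 \<longrightarrow> f u = 0" "u > 0"
  shows "f u = 0"
proof -
  obtain L where L: "\<forall>u>0. f u = (\<Sum>p\<leftarrow>L. fst p * u powr snd p)" using assms(1) unfolding gp_def by blast
  have eq: "(\<Sum>p\<leftarrow>L. fst p * u powr snd p) = (\<Sum>i\<in>{0..<length L}. fst (L!i) * u powr snd (L!i))" for u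
    by (simp add: sum_list_sum_nth)
  have "f u = (\<Sum>i\<in>{0..<length L}. fst (L!i) * u powr snd (L!i))" using L assms(3) eq by simp
  also have "\<dots> = 0"
  proof (rule powr_indep_idx[OF _ _ assms(3)])
    show "\<forall>u. 0 < u \<longrightarrow> u < 1 \<longrightarrow> (\<Sum>i\<in>{0..<length L}. fst (L!i) * u powr snd (L!i)) = 0"
    proof (intro allI impI)
      fix u :: real assume u: "0 < u" "u < 1"
      have "f u = (\<Sum>i\<in>{0..<length L}. fst (L!i) * u powr snd (L!i))" using L u(1) eq by simp
      then show "(\<Sum>i\<in>{0..<length L}. fst (L!i) * u powr snd (L!i)) = 0" using assms(2) u by simp
    qed
  qed simp
  finally show ?thesis .
qed


lemma gp_mon: "gp (\<lambda>u. c * u powr x)"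
  unfolding gp_def by (rule exI[of _ "[(c, x)]"]) simp

lemma gp_const: "gp (\<lambda>u. c)"
  unfolding gp_def by (rule exI[of _ "[(c, 0)]"]) simp

lemma gp_add: assumes "gp f" "gp g" shows "gp (\<lambda>u. f u + g u)"
proof -
  obtain L M where L: "\<forall>u>0. f u = (\<Sum>p\<leftarrow>L. fst p * u powr snd p)"
    and M: "\<forall>u>0. g u = (\<Sum>p\<leftarrow>M. fst p * u powr snd p)" using assms unfolding gp_def by blast
  have "\<forall>u>0. f u + g u = (\<Sum>p\<leftarrow>L @ M. fst p * u powr snd p)" using L M by simp
  then show ?thesis unfolding gp_def by blast
qed

lemma gp_scale: "gp f \<Longrightarrow> gp (\<lambda>u. c * f u)"
proof -
  assume "gp f"
  then obtain L where L: "\<forall>u>0. f u = (\<Sum>p\<leftarrow>L. fst p * u powr snd p)" unfolding gp_def by blast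
  have "\<forall>u>0. c * f u = (\<Sum>p\<leftarrow>map (\<lambda>p. (c * fst p, snd p)) L. fst p * u powr snd p)"
    using L by (simp add: sum_list_const_mult o_def mult.assoc)
  then show ?thesis unfolding gp_def by blast
qed

lemma gp_diff: assumes "gp f" "gp g" shows "gp (\<lambda>u. f u - g u)"
proof -
  have "gp (\<lambda>u. f u + (-1) * g u)" by (rule gp_add[OF assms(1) gp_scale[OF assms(2)]])
  then show ?thesis by simp
qed

lemma gp_mult: assumes "gp f" "gp g" shows "gp (\<lambda>u. f u * g u)"
proof -
  obtain L M where L: "\<forall>u>0. f u = (\<Sum>p\<leftarrow>L. fst p * u powr snd p)"
    and M: "\<forall>u>0. g u = (\<Sum>p\<leftarrow>M. fst p * u powr snd p)" using assms unfolding gp_def by blast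
  have key: "(\<Sum>p\<leftarrow>L. fst p * u powr snd p) * (\<Sum>p\<leftarrow>M. fst p * u powr snd p)
     = (\<Sum>p\<leftarrow>concat (map (\<lambda>p. map (\<lambda>q. (fst p * fst q, snd p + snd q)) M) L). fst p * u powr snd p)"
    for u
  proof (induction L)
    case Nil then show ?case by simp
  next
    case (Cons a L)
    have "(\<Sum>p\<leftarrow>map (\<lambda>q. (fst a * fst q, snd a + snd q)) M. fst p * u powr snd p)
        = fst a * u powr snd a * (\<Sum>p\<leftarrow>M. fst p * u powr snd p)"
      by (simp add: sum_list_const_mult[symmetric] o_def powr_add mult_ac)
    then show ?case using Cons by (simp add: distrib_right)
  qed
  have "\<forall>u>0. f u * g u = (\<Sum>p\<leftarrow>concat (map (\<lambda>p. map (\<lambda>q. (fst p * fst q, snd p + snd q)) M) L). fst p * u powr snd p)"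
    using L M key by simp
  then show ?thesis unfolding gp_def by blast
qed

lemma gp_sum: "finite A \<Longrightarrow> (\<And>a. a \<in> A \<Longrightarrow> gp (f a)) \<Longrightarrow> gp (\<lambda>u. \<Sum>a\<in>A. f a u)"
proof (induction A rule: finite_induct)
  case empty then show ?case using gp_const[of 0] by simp
next
  case (insert a A)
  have "gp (\<lambda>u. f a u + (\<Sum>a\<in>A. f a u))"
    by (rule gp_add) (use insert in auto)
  then show ?case using insert by simp
qed

lemma gp_prod: "finite A \<Longrightarrow> (\<And>a. a \<in> A \<Longrightarrow> gp (f a)) \<Longrightarrow> gp (\<lambda>u. \<Prod>a\<in>A. f a u)"
proof (induction A rule: finite_induct)
  case empty then show ?case using gp_const[of 1] by simp
next
  case (insert a A)
  have "gp (\<lambda>u. f a u * (\<Prod>a\<in>A. f a u))"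
    by (rule gp_mult) (use insert in auto)
  then show ?case using insert by simp
qed

lemma sum_fun_apply: "(\<Sum>i\<in>S. f i) x = (\<Sum>i\<in>S. f i x)"
  by (induction S rule: infinite_finite_induct) auto

lemma monN_pos: "(\<forall>n\<in>N. t n > 0) \<Longrightarrow> monN N t x > 0"
  unfolding monN_def by (rule prod_pos) auto

lemma monN_add: "(\<forall>n\<in>N. t n > 0) \<Longrightarrow> monN N t (x + y) = monN N t x * monN N t y"
  unfolding monN_def by (simp add: of_rat_add powr_add prod.distrib[symmetric])

lemma monN_zero: "(\<forall>n\<in>N. t n > 0) \<Longrightarrow> monN N t 0 = 1"
  unfolding monN_def by (rule prod.neutral) auto

lemma monN_diff: "(\<forall>n\<in>N. t n > 0) \<Longrightarrow> monN N t (x - y) = monN N t x / monN N t y"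
proof -
  assume t: "\<forall>n\<in>N. t n > 0"
  have "monN N t (x - y) * monN N t y = monN N t x"
    using monN_add[OF t, of "x - y" y] by simp
  then show ?thesis using monN_pos[OF t, of y] by (simp add: field_simps)
qed

lemma monN_cong: "(\<forall>n\<in>N. x n = y n) \<Longrightarrow> monN N t x = monN N t y"
  unfolding monN_def by (rule prod.cong) auto

lemma monN_sum:
  assumes t: "\<forall>n\<in>N. t n > 0" and S: "finite S"
  shows "monN N t (\<Sum>i\<in>S. x i) = (\<Prod>i\<in>S. monN N t (x i))"
  using S
proof (induction S rule: finite_induct)
  case empty show ?case by (simp only: sum.empty prod.empty monN_zero[OF t])
next
  case (insert a S)
  have "monN N t (sum x (insert a S)) = monN N t (x a + sum x S)" by (simp only: sum.insert[OF insert(1,2)])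
  also have "\<dots> = monN N t (x a) * monN N t (sum x S)" by (rule monN_add[OF t])
  finally show ?case by (simp only: insert(3) prod.insert[OF insert(1,2)])
qed

definition SPsum :: "'v set \<Rightarrow> (('v \<Rightarrow> rat) \<Rightarrow> int) \<Rightarrow> ('v \<Rightarrow> real) \<Rightarrow> real" where
  "SPsum N P t = (\<Sum>\<beta>\<in>{\<beta>. P \<beta> \<noteq> 0}. of_int (P \<beta>) * monN N t \<beta>)"

lemma SPsum_superset:
  assumes "finite F" "{\<beta>. P \<beta> \<noteq> 0} \<subseteq> F"
  shows "SPsum N P t = (\<Sum>\<beta>\<in>F. of_int (P \<beta>) * monN N t \<beta>)"
  unfolding SPsum_def by (rule sum.mono_neutral_left) (use assms in auto)

definition decomp :: "'v set \<Rightarrow> ('v \<Rightarrow> rat) \<Rightarrow> (('v \<Rightarrow> real) \<Rightarrow> real) \<Rightarrow> (('v \<Rightarrow> real) \<Rightarrow> real)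
   \<Rightarrow> (('v \<Rightarrow> rat) \<Rightarrow> int) \<Rightarrow> (('v \<Rightarrow> rat) \<Rightarrow> int) \<Rightarrow> bool" where
  "decomp N A Dt f P R \<longleftrightarrow> finite {\<beta>. P \<beta> \<noteq> 0} \<and> finite {\<beta>. R \<beta> \<noteq> 0}
     \<and> (\<forall>\<beta>. P \<beta> \<noteq> 0 \<longrightarrow> (\<forall>v. v \<notin> N \<longrightarrow> \<beta> v = 0) \<and> \<not> (\<forall>n\<in>N. \<beta> n < 0))
     \<and> (\<forall>\<beta>. R \<beta> \<noteq> 0 \<longrightarrow> (\<forall>v. v \<notin> N \<longrightarrow> \<beta> v = 0) \<and> (\<forall>n\<in>N. \<beta> n < A n))
     \<and> (\<forall>t\<in>nodebox N. f t = SPsum N P t + SPsum N R t / Dt t)"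

definition DEC where "DEC N A Dt f \<longleftrightarrow> (\<exists>P R. decomp N A Dt f P R)"

lemma DEC_cong:
  assumes "DEC N A Dt f" "\<forall>t\<in>nodebox N. f t = g t"
  shows "DEC N A Dt g"
proof -
  obtain P R where "decomp N A Dt f P R" using assms(1) unfolding DEC_def by blast
  then have "decomp N A Dt g P R" using assms(2) unfolding decomp_def by simp
  then show ?thesis unfolding DEC_def by blast
qed

lemma DEC_add:
  assumes "DEC N A Dt f" "DEC N A Dt g"
  shows "DEC N A Dt (\<lambda>t. f t + g t)"
proof -
  obtain P1 R1 P2 R2 where d1: "decomp N A Dt f P1 R1" and d2: "decomp N A Dt g P2 R2"
    using assms unfolding DEC_def by blast
  let ?P = "\<lambda>\<beta>. P1 \<beta> + P2 \<beta>" and ?R = "\<lambda>\<beta>. R1 \<beta> + R2 \<beta>"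
  define FP where "FP = {\<beta>. P1 \<beta> \<noteq> 0} \<union> {\<beta>. P2 \<beta> \<noteq> 0}"
  define FR where "FR = {\<beta>. R1 \<beta> \<noteq> 0} \<union> {\<beta>. R2 \<beta> \<noteq> 0}"
  have fFP: "finite FP" and fFR: "finite FR" using d1 d2 unfolding decomp_def FP_def FR_def by auto
  have sP: "{\<beta>. ?P \<beta> \<noteq> 0} \<subseteq> FP" and sR: "{\<beta>. ?R \<beta> \<noteq> 0} \<subseteq> FR" unfolding FP_def FR_def by auto
  have P: "SPsum N ?P t = SPsum N P1 t + SPsum N P2 t" for t
    using SPsum_superset[OF fFP sP] SPsum_superset[OF fFP, of P1] SPsum_superset[OF fFP, of P2]
    by (auto simp: FP_def algebra_simps sum.distrib)
  have R: "SPsum N ?R t = SPsum N R1 t + SPsum N R2 t" for t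
    using SPsum_superset[OF fFR sR] SPsum_superset[OF fFR, of R1] SPsum_superset[OF fFR, of R2]
    by (auto simp: FR_def algebra_simps sum.distrib)
  have "decomp N A Dt (\<lambda>t. f t + g t) ?P ?R"
    unfolding decomp_def
  proof (intro conjI)
    show "finite {\<beta>. ?P \<beta> \<noteq> 0}" using fFP sP finite_subset by blast
    show "finite {\<beta>. ?R \<beta> \<noteq> 0}" using fFR sR finite_subset by blast
    show "\<forall>\<beta>. ?P \<beta> \<noteq> 0 \<longrightarrow> (\<forall>v. v \<notin> N \<longrightarrow> \<beta> v = 0) \<and> \<not> (\<forall>n\<in>N. \<beta> n < 0)"
    proof (intro allI impI)
      fix \<beta> assume "?P \<beta> \<noteq> 0"
      then have "P1 \<beta> \<noteq> 0 \<or> P2 \<beta> \<noteq> 0" by auto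
      then show "(\<forall>v. v \<notin> N \<longrightarrow> \<beta> v = 0) \<and> \<not> (\<forall>n\<in>N. \<beta> n < 0)"
        using d1 d2 unfolding decomp_def by blast
    qed
    show "\<forall>\<beta>. ?R \<beta> \<noteq> 0 \<longrightarrow> (\<forall>v. v \<notin> N \<longrightarrow> \<beta> v = 0) \<and> (\<forall>n\<in>N. \<beta> n < A n)"
    proof (intro allI impI)
      fix \<beta> assume "?R \<beta> \<noteq> 0"
      then have "R1 \<beta> \<noteq> 0 \<or> R2 \<beta> \<noteq> 0" by auto
      then show "(\<forall>v. v \<notin> N \<longrightarrow> \<beta> v = 0) \<and> (\<forall>n\<in>N. \<beta> n < A n)"
        using d1 d2 unfolding decomp_def by blast
    qed
    show "\<forall>t\<in>nodebox N. f t + g t = SPsum N ?P t + SPsum N ?R t / Dt t"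
      using d1 d2 unfolding decomp_def P R by (simp add: add_divide_distrib)
  qed
  then show ?thesis unfolding DEC_def by blast
qed

lemma DEC_smult:
  assumes "DEC N A Dt f"
  shows "DEC N A Dt (\<lambda>t. of_int c * f t)"
proof -
  obtain P1 R1 where d1: "decomp N A Dt f P1 R1" using assms unfolding DEC_def by blast
  let ?P = "\<lambda>\<beta>. c * P1 \<beta>" and ?R = "\<lambda>\<beta>. c * R1 \<beta>"
  have sP: "{\<beta>. ?P \<beta> \<noteq> 0} \<subseteq> {\<beta>. P1 \<beta> \<noteq> 0}" and sR: "{\<beta>. ?R \<beta> \<noteq> 0} \<subseteq> {\<beta>. R1 \<beta> \<noteq> 0}" by auto
  have fP: "finite {\<beta>. P1 \<beta> \<noteq> 0}" and fR: "finite {\<beta>. R1 \<beta> \<noteq> 0}" using d1 unfolding decomp_def by auto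
  have P: "SPsum N ?P t = of_int c * SPsum N P1 t" for t
    unfolding SPsum_superset[OF fP sP] SPsum_def by (simp add: sum_distrib_left mult_ac)
  have R: "SPsum N ?R t = of_int c * SPsum N R1 t" for t
    unfolding SPsum_superset[OF fR sR] SPsum_def by (simp add: sum_distrib_left mult_ac)
  have "decomp N A Dt (\<lambda>t. of_int c * f t) ?P ?R"
    unfolding decomp_def
  proof (intro conjI)
    show "finite {\<beta>. ?P \<beta> \<noteq> 0}" using fP sP finite_subset by blast
    show "finite {\<beta>. ?R \<beta> \<noteq> 0}" using fR sR finite_subset by blast
    show "\<forall>\<beta>. ?P \<beta> \<noteq> 0 \<longrightarrow> (\<forall>v. v \<notin> N \<longrightarrow> \<beta> v = 0) \<and> \<not> (\<forall>n\<in>N. \<beta> n < 0)"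
      using d1 unfolding decomp_def by simp
    show "\<forall>\<beta>. ?R \<beta> \<noteq> 0 \<longrightarrow> (\<forall>v. v \<notin> N \<longrightarrow> \<beta> v = 0) \<and> (\<forall>n\<in>N. \<beta> n < A n)"
      using d1 unfolding decomp_def by simp
    show "\<forall>t\<in>nodebox N. of_int c * f t = SPsum N ?P t + SPsum N ?R t / Dt t"
      using d1 unfolding decomp_def P R by (simp add: algebra_simps)
  qed
  then show ?thesis unfolding DEC_def by blast
qed

lemma DEC_zero: "DEC N A Dt (\<lambda>t. 0)"
proof -
  have "decomp N A Dt (\<lambda>t. 0) (\<lambda>_. 0) (\<lambda>_. 0)"
    unfolding decomp_def SPsum_def by simp
  then show ?thesis unfolding DEC_def by blast
qed

lemma DEC_sum:
  assumes "finite L" "\<And>l. l \<in> L \<Longrightarrow> DEC N A Dt (f l)"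
  shows "DEC N A Dt (\<lambda>t. \<Sum>l\<in>L. of_int (c l) * f l t)"
  using assms
proof (induction L rule: finite_induct)
  case empty then show ?case using DEC_zero by simp
next
  case (insert a L)
  have "DEC N A Dt (\<lambda>t. of_int (c a) * f a t + (\<Sum>l\<in>L. of_int (c l) * f l t))"
    by (rule DEC_add[OF DEC_smult]) (use insert in auto)
  then show ?case using insert by simp
qed

lemma SPsum_single: "SPsum N (\<lambda>\<gamma>. if \<gamma> = \<beta> then 1 else 0) t = monN N t \<beta>"
proof -
  have s: "{\<gamma>. (if \<gamma> = \<beta> then 1 else 0 :: int) \<noteq> 0} = {\<beta>}" by auto
  show ?thesis unfolding SPsum_def s by simp
qed

lemma SPsum_zero: "SPsum N (\<lambda>\<gamma>. 0) t = 0"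
  unfolding SPsum_def by simp

lemma DEC_poly:
  assumes "\<forall>v. v \<notin> N \<longrightarrow> \<beta> v = 0" "\<not> (\<forall>n\<in>N. \<beta> n < 0)"
  shows "DEC N A Dt (\<lambda>t. monN N t \<beta>)"
proof -
  have "decomp N A Dt (\<lambda>t. monN N t \<beta>) (\<lambda>\<gamma>. if \<gamma> = \<beta> then 1 else 0) (\<lambda>_. 0)"
    unfolding decomp_def SPsum_single SPsum_zero using assms by (simp add: if_split_asm)
  then show ?thesis unfolding DEC_def by blast
qed

lemma DEC_rat:
  assumes "\<forall>v. v \<notin> N \<longrightarrow> \<beta> v = 0" "\<forall>n\<in>N. \<beta> n < A n"
  shows "DEC N A Dt (\<lambda>t. monN N t \<beta> / Dt t)"
proof -
  have "decomp N A Dt (\<lambda>t. monN N t \<beta> / Dt t) (\<lambda>_. 0) (\<lambda>\<gamma>. if \<gamma> = \<beta> then 1 else 0)"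
    unfolding decomp_def SPsum_single SPsum_zero using assms by (simp add: if_split_asm)
  then show ?thesis unfolding DEC_def by blast
qed

lemma Dt_expand:
  assumes fin: "finite N" and t: "\<forall>n\<in>N. t n > 0"
  shows "(\<Prod>n\<in>N. 1 - monN N t (a n)) = (\<Sum>S\<in>Pow N. (-1) ^ card S * monN N t (\<Sum>n\<in>S. a n))"
proof -
  have "(\<Prod>n\<in>N. 1 - monN N t (a n)) = (\<Prod>n\<in>N. (- monN N t (a n)) + 1)" by simp
  also have "\<dots> = (\<Sum>S\<in>Pow N. (\<Prod>n\<in>S. - monN N t (a n)) * (\<Prod>n\<in>N - S. 1))"
    by (rule prod_add[OF fin])
  also have "\<dots> = (\<Sum>S\<in>Pow N. (-1) ^ card S * monN N t (\<Sum>n\<in>S. a n))"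
  proof (rule sum.cong[OF refl])
    fix S assume "S \<in> Pow N"
    then have fS: "finite S" using fin finite_subset by auto
    show "(\<Prod>n\<in>S. - monN N t (a n)) * (\<Prod>n\<in>N - S. 1) = (-1) ^ card S * monN N t (\<Sum>n\<in>S. a n)"
      by (simp only: prod_uminus monN_sum[OF t fS] prod.neutral_const mult_1_right)
  qed
  finally show ?thesis .
qed

lemma exist_core:
  fixes N :: "'v set" and a :: "'v \<Rightarrow> 'v \<Rightarrow> rat" and \<delta> :: rat
  assumes fin: "finite N"
    and azero: "\<forall>n v. v \<notin> N \<longrightarrow> a n v = 0"
    and apos: "\<forall>n\<in>N. \<forall>m\<in>N. a n m \<ge> \<delta>" and dpos: "\<delta> > 0"
    and Adef: "A = (\<lambda>m. \<Sum>n\<in>N. a n m)"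
    and Ddef: "Dt = (\<lambda>t. \<Prod>n\<in>N. 1 - monN N t (a n))"
    and Dnz: "\<forall>t\<in>nodebox N. Dt t \<noteq> 0"
    and gz: "\<forall>v. v \<notin> N \<longrightarrow> \<gamma> v = 0"
  shows "DEC N A Dt (\<lambda>t. monN N t \<gamma> / Dt t)"
proof -
  have Az: "v \<notin> N \<Longrightarrow> A v = 0" for v using azero unfolding Adef by simp
  have main: "\<forall>\<gamma>. (\<forall>v. v \<notin> N \<longrightarrow> \<gamma> v = 0) \<longrightarrow> (\<forall>m\<in>N. \<gamma> m - A m < of_nat k * \<delta>)
       \<longrightarrow> DEC N A Dt (\<lambda>t. monN N t \<gamma> / Dt t)" for k
  proof (induction k)
    case 0
    show ?case
    proof (intro allI impI)
      fix \<gamma> :: "'v \<Rightarrow> rat" assume "\<forall>v. v \<notin> N \<longrightarrow> \<gamma> v = 0" "\<forall>m\<in>N. \<gamma> m - A m < of_nat 0 * \<delta>"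
      then show "DEC N A Dt (\<lambda>t. monN N t \<gamma> / Dt t)" by (intro DEC_rat) auto
    qed
  next
    case (Suc k)
    show ?case
    proof (intro allI impI)
      fix \<gamma> :: "'v \<Rightarrow> rat"
      assume gz: "\<forall>v. v \<notin> N \<longrightarrow> \<gamma> v = 0" and gb: "\<forall>m\<in>N. \<gamma> m - A m < of_nat (Suc k) * \<delta>"
      show "DEC N A Dt (\<lambda>t. monN N t \<gamma> / Dt t)"
      proof (cases "\<forall>m\<in>N. \<gamma> m < A m")
        case True then show ?thesis using gz by (intro DEC_rat) auto
      next
        case False
        then obtain m where mN: "m \<in> N" and mge: "\<gamma> m \<ge> A m" by (auto simp: not_less)
        define s :: int where "s = (-1) ^ card N"
        define aS where "aS = (\<lambda>S. \<Sum>n\<in>S. a n)"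
        define \<gamma>0 where "\<gamma>0 = \<gamma> - A"
        have aS_app: "aS S v = (\<Sum>n\<in>S. a n v)" for S v unfolding aS_def by (rule sum_fun_apply)
        have g0z: "\<forall>v. v \<notin> N \<longrightarrow> \<gamma>0 v = 0" using gz Az unfolding \<gamma>0_def by simp
        have g0N: "\<gamma>0 + aS N = \<gamma>" unfolding \<gamma>0_def by (rule ext) (simp add: aS_app Adef)
        have ss: "of_int s * of_int s = (1::real)" unfolding s_def
          by (simp flip: power_mult_distrib of_int_mult)
        have id: "monN N t \<gamma> / Dt t = of_int s * monN N t \<gamma>0
              + of_int (-1) * (\<Sum>S\<in>Pow N - {N}. of_int (s * (-1) ^ card S) * (monN N t (\<gamma>0 + aS S) / Dt t))"
          if tb: "t \<in> nodebox N" for t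
        proof -
          have t: "\<forall>n\<in>N. t n > 0" using tb unfolding nodebox_def by auto
          have D: "Dt t = (\<Sum>S\<in>Pow N. (-1) ^ card S * monN N t (aS S))"
            unfolding Ddef aS_def by (rule Dt_expand[OF fin t])
          have "monN N t \<gamma>0 * Dt t = (\<Sum>S\<in>Pow N. (-1) ^ card S * monN N t (\<gamma>0 + aS S))"
            unfolding D sum_distrib_left by (rule sum.cong) (simp_all add: monN_add[OF t] mult_ac)
          also have "\<dots> = (-1) ^ card N * monN N t \<gamma>
               + (\<Sum>S\<in>Pow N - {N}. (-1) ^ card S * monN N t (\<gamma>0 + aS S))"
            using sum.remove[of "Pow N" N "\<lambda>S. (-1) ^ card S * monN N t (\<gamma>0 + aS S)"] fin g0N by simp
          finally have e1: "monN N t \<gamma>0 * Dt t = of_int s * monN N t \<gamma>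
               + (\<Sum>S\<in>Pow N - {N}. (-1) ^ card S * monN N t (\<gamma>0 + aS S))" unfolding s_def by simp
          have "monN N t \<gamma> = of_int s * (monN N t \<gamma>0 * Dt t - (\<Sum>S\<in>Pow N - {N}. (-1) ^ card S * monN N t (\<gamma>0 + aS S)))"
            unfolding e1 by (simp add: algebra_simps ss flip: mult.assoc)
          then have "monN N t \<gamma> / Dt t = of_int s * monN N t \<gamma>0
              - of_int s * (\<Sum>S\<in>Pow N - {N}. (-1) ^ card S * monN N t (\<gamma>0 + aS S)) / Dt t"
            using Dnz tb by (simp add: field_simps)
          also have "\<dots> = of_int s * monN N t \<gamma>0
              + of_int (-1) * (\<Sum>S\<in>Pow N - {N}. of_int (s * (-1) ^ card S) * (monN N t (\<gamma>0 + aS S) / Dt t))"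
            by (simp add: sum_distrib_left sum_divide_distrib mult_ac sum_negf)
          finally show ?thesis .
        qed
        have d1: "DEC N A Dt (\<lambda>t. monN N t \<gamma>0)"
          by (rule DEC_poly[OF g0z]) (use mN mge in \<open>force simp: \<gamma>0_def not_less\<close>)
        have d2: "DEC N A Dt (\<lambda>t. monN N t (\<gamma>0 + aS S) / Dt t)" if S: "S \<in> Pow N - {N}" for S
        proof -
          have IH: "\<forall>\<gamma>. (\<forall>v. v \<notin> N \<longrightarrow> \<gamma> v = 0) \<longrightarrow> (\<forall>m\<in>N. \<gamma> m - A m < of_nat k * \<delta>)
               \<longrightarrow> DEC N A Dt (\<lambda>t. monN N t \<gamma> / Dt t)" by (rule Suc.IH)
          have SN: "S \<subseteq> N" "S \<noteq> N" using S by auto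
          then obtain n0 where n0: "n0 \<in> N - S" by blast
          have z: "\<forall>v. v \<notin> N \<longrightarrow> (\<gamma>0 + aS S) v = 0"
            using g0z azero by (simp add: aS_app)
          have b: "\<forall>m\<in>N. (\<gamma>0 + aS S) m - A m < of_nat k * \<delta>"
          proof
            fix m assume mN: "m \<in> N"
            have split: "A m = (\<Sum>n\<in>N - S. a n m) + aS S m"
              unfolding Adef aS_app by (rule sum.subset_diff[OF SN(1) fin])
            have "a n0 m \<le> (\<Sum>n\<in>N - S. a n m)"
              by (rule member_le_sum) (use n0 fin apos dpos mN in \<open>auto intro: order.trans[OF less_imp_le[OF dpos]]\<close>)
            moreover have "a n0 m \<ge> \<delta>" using apos n0 mN by auto
            ultimately have "A m - aS S m \<ge> \<delta>" using split by simp
            moreover have "\<gamma> m - A m < of_nat (Suc k) * \<delta>" using gb mN by auto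
            ultimately show "(\<gamma>0 + aS S) m - A m < of_nat k * \<delta>"
              unfolding \<gamma>0_def by (simp add: algebra_simps)
          qed
          show ?thesis using IH z b by blast
        qed
        have "DEC N A Dt (\<lambda>t. of_int s * monN N t \<gamma>0
              + of_int (-1) * (\<Sum>S\<in>Pow N - {N}. of_int (s * (-1) ^ card S) * (monN N t (\<gamma>0 + aS S) / Dt t)))"
          by (intro DEC_add DEC_smult d1 DEC_sum d2) (use fin in auto)
        then show ?thesis by (rule DEC_cong) (use id in auto)
      qed
    qed
  qed
  obtain k where k: "(\<Sum>m\<in>N. \<bar>\<gamma> m - A m\<bar>) < of_nat k * \<delta>"
    using ex_less_of_nat_mult[OF dpos] by blast
  have "\<forall>m\<in>N. \<gamma> m - A m < of_nat k * \<delta>"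
  proof
    fix m assume "m \<in> N"
    then have "\<bar>\<gamma> m - A m\<bar> \<le> (\<Sum>m\<in>N. \<bar>\<gamma> m - A m\<bar>)"
      by (intro member_le_sum) (use fin in auto)
    then show "\<gamma> m - A m < of_nat k * \<delta>" using k by linarith
  qed
  then show ?thesis using main gz by blast
qed

definition rN :: "'v set \<Rightarrow> ('v \<Rightarrow> rat) \<Rightarrow> 'v \<Rightarrow> rat" where
  "rN N \<beta> = (\<lambda>v. if v \<in> N then \<beta> v else 0)"

lemma monN_upd:
  assumes "m \<in> N" "finite N"
  shows "monN N (t(m := u)) \<beta> = u powr real_of_rat (\<beta> m) * monN (N - {m}) t \<beta>"
proof -
  have "monN N (t(m := u)) \<beta> = (t(m := u)) m powr real_of_rat (\<beta> m) * (\<Prod>n\<in>N - {m}. (t(m := u)) n powr real_of_rat (\<beta> n))"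
    unfolding monN_def by (rule prod.remove[OF assms(2,1)])
  also have "(\<Prod>n\<in>N - {m}. (t(m := u)) n powr real_of_rat (\<beta> n)) = monN (N - {m}) t \<beta>"
    unfolding monN_def by (rule prod.cong) auto
  finally show ?thesis by (simp only: fun_upd_same)
qed

lemma mli:
  fixes c :: "('v \<Rightarrow> rat) \<Rightarrow> real"
  assumes "finite N"
  shows "finite F \<Longrightarrow> inj_on (rN N) F \<Longrightarrow> (\<forall>t\<in>nodebox N. (\<Sum>\<beta>\<in>F. c \<beta> * monN N t \<beta>) = 0)
    \<Longrightarrow> \<forall>\<beta>\<in>F. c \<beta> = 0"
  using assms
proof (induction N arbitrary: F c rule: finite_induct)
  case empty
  show ?case
  proof
    fix \<beta> assume b: "\<beta> \<in> F"
    have "F = {\<beta>}"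
    proof
      show "F \<subseteq> {\<beta>}"
      proof
        fix \<beta>' assume "\<beta>' \<in> F"
        moreover have "rN {} \<beta>' = rN {} \<beta>" unfolding rN_def by simp
        ultimately show "\<beta>' \<in> {\<beta>}" using empty.prems(2) b by (auto dest: inj_onD)
      qed
    qed (use b in auto)
    moreover have "(\<lambda>_. 1/2) \<in> nodebox ({}::'v set)" unfolding nodebox_def by simp
    ultimately show "c \<beta> = 0" using empty.prems(3) unfolding monN_def by fastforce
  qed
next
  case (insert m N0 F c)
  define e where "e = (\<lambda>\<beta>::'v\<Rightarrow>rat. real_of_rat (\<beta> m))"
  have grp: "\<forall>x\<in>e ` F. (\<Sum>\<beta>\<in>{\<beta>\<in>F. e \<beta> = x}. c \<beta> * monN N0 t \<beta>) = 0" if t: "t \<in> nodebox N0" for t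
  proof -
    have "\<forall>u. 0 < u \<longrightarrow> u < 1 \<longrightarrow> (\<Sum>x\<in>e ` F. (\<Sum>\<beta>\<in>{\<beta>\<in>F. e \<beta> = x}. c \<beta> * monN N0 t \<beta>) * u powr x) = 0"
    proof (intro allI impI)
      fix u :: real assume u: "0 < u" "u < 1"
      have tb: "t(m := u) \<in> nodebox (insert m N0)" using t u insert.hyps(2) unfolding nodebox_def by auto
      have "0 = (\<Sum>\<beta>\<in>F. c \<beta> * monN (insert m N0) (t(m := u)) \<beta>)" using insert.prems(3) tb by simp
      also have "\<dots> = (\<Sum>\<beta>\<in>F. (c \<beta> * monN N0 t \<beta>) * u powr e \<beta>)"
        unfolding monN_upd[OF insertI1 finite.insertI[OF insert.hyps(1)]] e_def using insert.hyps(2) by (simp add: mult_ac)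
      also have "\<dots> = (\<Sum>x\<in>e ` F. (\<Sum>\<beta>\<in>{\<beta>\<in>F. e \<beta> = x}. c \<beta> * monN N0 t \<beta>) * u powr x)"
        by (rule sum_group_powr[OF insert.prems(1)])
      finally show "(\<Sum>x\<in>e ` F. (\<Sum>\<beta>\<in>{\<beta>\<in>F. e \<beta> = x}. c \<beta> * monN N0 t \<beta>) * u powr x) = 0" by simp
    qed
    then show ?thesis by (intro powr_indep) (use insert.prems(1) in auto)
  qed
  show ?case
  proof
    fix \<beta> assume b: "\<beta> \<in> F"
    let ?Fx = "{\<beta>'\<in>F. e \<beta>' = e \<beta>}"
    have "\<forall>\<beta>'\<in>?Fx. c \<beta>' = 0"
    proof (rule insert.IH)
      show "finite ?Fx" using insert.prems(1) by simp
      show "inj_on (rN N0) ?Fx"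
      proof (rule inj_onI)
        fix x y assume x: "x \<in> ?Fx" and y: "y \<in> ?Fx" and eq: "rN N0 x = rN N0 y"
        have "x m = y m" using x y unfolding e_def by simp
        then have "rN (insert m N0) x = rN (insert m N0) y"
          using eq unfolding rN_def by (auto simp: fun_eq_iff split: if_splits)
        then show "x = y" using insert.prems(2) x y by (auto dest: inj_onD)
      qed
      show "\<forall>t\<in>nodebox N0. (\<Sum>\<beta>'\<in>?Fx. c \<beta>' * monN N0 t \<beta>') = 0"
        using grp b by blast
    qed
    then show "c \<beta> = 0" using b by simp
  qed
qed

lemma lim_pow:
  assumes "x \<le> 0"
  shows "((\<lambda>u::real. c * u powr x) \<longlongrightarrow> (if x = 0 then c else 0)) at_top"
proof (cases "x = 0")
  case True
  have "eventually (\<lambda>u::real. c = c * u powr x) at_top"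
    using eventually_gt_at_top[of "0::real"] by (rule eventually_mono) (simp add: True)
  from Lim_transform_eventually[OF tendsto_const this] show ?thesis using True by simp
next
  case False
  then have "x < 0" using assms by simp
  have "((\<lambda>u::real. c * u powr x) \<longlongrightarrow> c * 0) at_top"
    by (rule tendsto_mult[OF tendsto_const tendsto_neg_powr[OF \<open>x < 0\<close> filterlim_ident]])
  then show ?thesis using False by simp
qed

lemma top_coeff_zero:
  fixes N :: "'v set" and a :: "'v \<Rightarrow> 'v \<Rightarrow> rat" and Q Rd :: "('v \<Rightarrow> rat) \<Rightarrow> int"
  assumes fin: "finite N" and mN: "m \<in> N"
    and apos: "\<forall>n\<in>N. a n m > 0"
    and fF: "finite F" and fG: "finite G"
    and Fb: "\<forall>\<beta>\<in>F. Q \<beta> \<noteq> 0 \<longrightarrow> \<beta> m \<le> \<mu>"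
    and mu0: "\<mu> \<ge> 0"
    and Gb: "\<forall>\<beta>\<in>G. Rd \<beta> \<noteq> 0 \<longrightarrow> \<beta> m < (\<Sum>n\<in>N. a n m)"
    and ident: "\<forall>t\<in>nodebox N. (\<Sum>\<beta>\<in>F. of_int (Q \<beta>) * monN N t \<beta>) * (\<Prod>n\<in>N. 1 - monN N t (a n))
                   = (\<Sum>\<beta>\<in>G. of_int (Rd \<beta>) * monN N t \<beta>)"
    and t: "t \<in> nodebox (N - {m})"
  shows "(\<Sum>\<beta>\<in>{\<beta>\<in>F. Q \<beta> \<noteq> 0 \<and> \<beta> m = \<mu>}. of_int (Q \<beta>) * monN (N - {m}) t \<beta>) = 0"
proof -
  define k where "k = (\<lambda>\<beta>. monN (N - {m}) t \<beta>)"
  define kn where "kn = (\<lambda>n. monN (N - {m}) t (a n))"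
  have tpos: "\<forall>n\<in>N - {m}. t n > 0" using t unfolding nodebox_def by auto
  have knpos: "kn n > 0" for n unfolding kn_def by (rule monN_pos[OF tpos])
  define fQ where "fQ = (\<lambda>u. \<Sum>\<beta>\<in>F. of_int (Q \<beta>) * k \<beta> * u powr real_of_rat (\<beta> m))"
  define fD where "fD = (\<lambda>u. \<Prod>n\<in>N. 1 - kn n * u powr real_of_rat (a n m))"
  define fR where "fR = (\<lambda>u. \<Sum>\<beta>\<in>G. of_int (Rd \<beta>) * k \<beta> * u powr real_of_rat (\<beta> m))"
  have small: "fQ u * fD u - fR u = 0" if u: "0 < u" "u < 1" for u
  proof -
    have tb: "t(m := u) \<in> nodebox N" using t u unfolding nodebox_def by auto
    have mu: "monN N (t(m := u)) \<beta> = u powr real_of_rat (\<beta> m) * k \<beta>" for \<beta>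
      unfolding k_def by (rule monN_upd[OF mN fin])
    have "fQ u = (\<Sum>\<beta>\<in>F. of_int (Q \<beta>) * monN N (t(m := u)) \<beta>)"
      unfolding fQ_def mu by (simp add: mult_ac)
    moreover have "fR u = (\<Sum>\<beta>\<in>G. of_int (Rd \<beta>) * monN N (t(m := u)) \<beta>)"
      unfolding fR_def mu by (simp add: mult_ac)
    moreover have "fD u = (\<Prod>n\<in>N. 1 - monN N (t(m := u)) (a n))"
      unfolding fD_def mu kn_def k_def by (simp add: mult_ac)
    ultimately show ?thesis using ident tb by simp
  qed
  have gpf: "gp (\<lambda>u. fQ u * fD u - fR u)"
    unfolding fQ_def fD_def fR_def
    by (intro gp_diff gp_mult gp_sum gp_prod gp_mon gp_const fF fG fin)
  have big: "fQ u * fD u = fR u" if "u > 0" for u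
    using gp_zero_ext[OF gpf _ that] small by simp
  define mu where "mu = real_of_rat \<mu>"
  define Am where "Am = real_of_rat (\<Sum>n\<in>N. a n m)"
  define S where "S = (\<Sum>\<beta>\<in>F. if Q \<beta> \<noteq> 0 \<and> \<beta> m = \<mu> then of_int (Q \<beta>) * k \<beta> else 0)"
  have L1: "((\<lambda>u. fQ u * u powr (-mu)) \<longlongrightarrow> S) at_top"
  proof -
    have ev: "eventually (\<lambda>u. (\<Sum>\<beta>\<in>F. (of_int (Q \<beta>) * k \<beta>) * u powr (real_of_rat (\<beta> m) - mu))
                = fQ u * u powr (-mu)) at_top"
      using eventually_gt_at_top[of "0::real"]
      by (rule eventually_mono) (simp add: fQ_def sum_distrib_right mult.assoc powr_add[symmetric])
    have "((\<lambda>u. \<Sum>\<beta>\<in>F. (of_int (Q \<beta>) * k \<beta>) * u powr (real_of_rat (\<beta> m) - mu)) \<longlongrightarrow> S) at_top"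
      unfolding S_def
    proof (rule tendsto_sum)
      fix \<beta> assume b: "\<beta> \<in> F"
      show "((\<lambda>u. (of_int (Q \<beta>) * k \<beta>) * u powr (real_of_rat (\<beta> m) - mu)) \<longlongrightarrow>
              (if Q \<beta> \<noteq> 0 \<and> \<beta> m = \<mu> then of_int (Q \<beta>) * k \<beta> else 0)) at_top"
      proof (cases "Q \<beta> = 0")
        case True then show ?thesis by simp
      next
        case False
        then have "\<beta> m \<le> \<mu>" using Fb b by auto
        then have le: "real_of_rat (\<beta> m) - mu \<le> 0" unfolding mu_def by (simp add: of_rat_less_eq)
        have eq: "(real_of_rat (\<beta> m) - mu = 0) = (\<beta> m = \<mu>)" unfolding mu_def
          by (metis eq_iff_diff_eq_0 of_rat_eq_iff)
        show ?thesis using lim_pow[OF le, of "of_int (Q \<beta>) * k \<beta>"] False unfolding eq by simp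
      qed
    qed
    then show ?thesis using Lim_transform_eventually[OF _ ev] by blast
  qed
  have L2: "((\<lambda>u. fD u * u powr (-Am)) \<longlongrightarrow> (\<Prod>n\<in>N. 0 - kn n)) at_top"
  proof -
    have ev: "eventually (\<lambda>u. (\<Prod>n\<in>N. u powr (- real_of_rat (a n m)) - kn n) = fD u * u powr (-Am)) at_top"
      using eventually_gt_at_top[of "0::real"]
    proof (rule eventually_mono)
      fix u :: real assume u: "u > 0"
      have "u powr (-Am) = (\<Prod>n\<in>N. u powr (- real_of_rat (a n m)))"
        unfolding Am_def of_rat_sum using u by (simp add: powr_sum[symmetric] sum_negf)
      then have "fD u * u powr (-Am) = (\<Prod>n\<in>N. (1 - kn n * u powr real_of_rat (a n m)) * u powr (- real_of_rat (a n m)))"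
        unfolding fD_def by (simp add: prod.distrib)
      also have "\<dots> = (\<Prod>n\<in>N. u powr (- real_of_rat (a n m)) - kn n)"
        by (rule prod.cong) (use u in \<open>simp_all add: algebra_simps powr_add[symmetric]\<close>)
      finally show "(\<Prod>n\<in>N. u powr (- real_of_rat (a n m)) - kn n) = fD u * u powr (-Am)" by simp
    qed
    have "((\<lambda>u. \<Prod>n\<in>N. u powr (- real_of_rat (a n m)) - kn n) \<longlongrightarrow> (\<Prod>n\<in>N. 0 - kn n)) at_top"
    proof (rule tendsto_prod, rule tendsto_diff[OF _ tendsto_const])
      fix n assume "n \<in> N"
      then have "- real_of_rat (a n m) < 0" using apos by simp
      then show "((\<lambda>u::real. u powr (- real_of_rat (a n m))) \<longlongrightarrow> 0) at_top"
        by (rule tendsto_neg_powr[OF _ filterlim_ident])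
    qed
    then show ?thesis using Lim_transform_eventually[OF _ ev] by blast
  qed
  have L3: "((\<lambda>u. fR u * u powr (-(mu + Am))) \<longlongrightarrow> 0) at_top"
  proof -
    have ev: "eventually (\<lambda>u. (\<Sum>\<beta>\<in>G. (of_int (Rd \<beta>) * k \<beta>) * u powr (real_of_rat (\<beta> m) + (- mu - Am)))
                = fR u * u powr (-(mu + Am))) at_top"
      using eventually_gt_at_top[of "0::real"]
      by (rule eventually_mono) (simp add: fR_def sum_distrib_right mult.assoc powr_add[symmetric])
    have "((\<lambda>u. \<Sum>\<beta>\<in>G. (of_int (Rd \<beta>) * k \<beta>) * u powr (real_of_rat (\<beta> m) + (- mu - Am))) \<longlongrightarrow> (\<Sum>\<beta>\<in>G. 0)) at_top"
    proof (rule tendsto_sum)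
      fix \<beta> assume b: "\<beta> \<in> G"
      show "((\<lambda>u. (of_int (Rd \<beta>) * k \<beta>) * u powr (real_of_rat (\<beta> m) + (- mu - Am))) \<longlongrightarrow> 0) at_top"
      proof (cases "Rd \<beta> = 0")
        case True then show ?thesis by simp
      next
        case False
        then have "\<beta> m < (\<Sum>n\<in>N. a n m)" using Gb b by auto
        then have "real_of_rat (\<beta> m) < Am" unfolding Am_def by (simp add: of_rat_less)
        moreover have "mu \<ge> 0" unfolding mu_def using mu0 by simp
        ultimately have lt: "real_of_rat (\<beta> m) + (- mu - Am) < 0" by linarith
        have "((\<lambda>u::real. (of_int (Rd \<beta>) * k \<beta>) * u powr (real_of_rat (\<beta> m) + (- mu - Am))) \<longlongrightarrow> (of_int (Rd \<beta>) * k \<beta>) * 0) at_top"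
          by (rule tendsto_mult[OF tendsto_const tendsto_neg_powr[OF lt filterlim_ident]])
        then show ?thesis by simp
      qed
    qed
    then show ?thesis using Lim_transform_eventually[OF _ ev] by simp
  qed
  have ev: "eventually (\<lambda>u. (fQ u * u powr (-mu)) * (fD u * u powr (-Am)) = fR u * u powr (-(mu + Am))) at_top"
    using eventually_gt_at_top[of "0::real"]
  proof (rule eventually_mono)
    fix u :: real assume u: "u > 0"
    have "u powr (-(mu + Am)) = u powr (-mu) * u powr (-Am)" by (simp add: powr_add[symmetric])
    then show "(fQ u * u powr (-mu)) * (fD u * u powr (-Am)) = fR u * u powr (-(mu + Am))"
      using big[OF u] by (simp add: mult_ac)
  qed
  have "((\<lambda>u. fR u * u powr (-(mu + Am))) \<longlongrightarrow> S * (\<Prod>n\<in>N. 0 - kn n)) at_top"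
    using Lim_transform_eventually[OF tendsto_mult[OF L1 L2] ev] .
  then have "S * (\<Prod>n\<in>N. 0 - kn n) = 0" using L3 tendsto_unique[OF trivial_limit_at_top_linorder] by blast
  moreover have "(\<Prod>n\<in>N. 0 - kn n) \<noteq> 0" 
  proof -
    have "\<forall>n. kn n \<noteq> 0" using knpos by (metis less_irrefl)
    then show ?thesis by (simp add: prod_zero_iff[OF fin])
  qed
  ultimately have "S = 0" by simp
  then show ?thesis unfolding S_def k_def by (subst sum.inter_filter[OF fF]) simp
qed

lemma decomp_P: "decomp N A Dt f P R \<Longrightarrow> P \<beta> \<noteq> 0 \<Longrightarrow> (\<forall>v. v \<notin> N \<longrightarrow> \<beta> v = 0) \<and> \<not> (\<forall>n\<in>N. \<beta> n < 0)"
  unfolding decomp_def by blast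
lemma decomp_R: "decomp N A Dt f P R \<Longrightarrow> R \<beta> \<noteq> 0 \<Longrightarrow> (\<forall>v. v \<notin> N \<longrightarrow> \<beta> v = 0) \<and> (\<forall>n\<in>N. \<beta> n < A n)"
  unfolding decomp_def by blast
lemma decomp_eq: "decomp N A Dt f P R \<Longrightarrow> t \<in> nodebox N \<Longrightarrow> f t = SPsum N P t + SPsum N R t / Dt t"
  unfolding decomp_def by blast
lemma decomp_fin: "decomp N A Dt f P R \<Longrightarrow> finite {\<beta>. P \<beta> \<noteq> 0} \<and> finite {\<beta>. R \<beta> \<noteq> 0}"
  unfolding decomp_def by blast

lemma decomp_unique:
  fixes N :: "'v set" and a :: "'v \<Rightarrow> 'v \<Rightarrow> rat"
  assumes fin: "finite N"
    and apos: "\<forall>n\<in>N. \<forall>m\<in>N. a n m > 0"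
    and Adef: "A = (\<lambda>m. \<Sum>n\<in>N. a n m)"
    and Ddef: "Dt = (\<lambda>t. \<Prod>n\<in>N. 1 - monN N t (a n))"
    and Dnz: "\<forall>t\<in>nodebox N. Dt t \<noteq> 0"
    and d1: "decomp N A Dt f P1 R1" and d2: "decomp N A Dt f P2 R2"
  shows "P1 = P2 \<and> R1 = R2"
proof -
  define F where "F = {\<beta>. P1 \<beta> \<noteq> 0} \<union> {\<beta>. P2 \<beta> \<noteq> 0}"
  define G where "G = {\<beta>. R1 \<beta> \<noteq> 0} \<union> {\<beta>. R2 \<beta> \<noteq> 0}"
  define Q where "Q = (\<lambda>\<beta>. P1 \<beta> - P2 \<beta>)"
  define Rd where "Rd = (\<lambda>\<beta>. R2 \<beta> - R1 \<beta>)"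
  have fF: "finite F" and fG: "finite G" using decomp_fin[OF d1] decomp_fin[OF d2] unfolding F_def G_def by auto
  have P1s: "SPsum N P1 t = (\<Sum>\<beta>\<in>F. of_int (P1 \<beta>) * monN N t \<beta>)" for t
    by (rule SPsum_superset[OF fF]) (auto simp: F_def)
  have P2s: "SPsum N P2 t = (\<Sum>\<beta>\<in>F. of_int (P2 \<beta>) * monN N t \<beta>)" for t
    by (rule SPsum_superset[OF fF]) (auto simp: F_def)
  have R1s: "SPsum N R1 t = (\<Sum>\<beta>\<in>G. of_int (R1 \<beta>) * monN N t \<beta>)" for t
    by (rule SPsum_superset[OF fG]) (auto simp: G_def)
  have R2s: "SPsum N R2 t = (\<Sum>\<beta>\<in>G. of_int (R2 \<beta>) * monN N t \<beta>)" for t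
    by (rule SPsum_superset[OF fG]) (auto simp: G_def)
  have ident: "(\<Sum>\<beta>\<in>F. of_int (Q \<beta>) * monN N t \<beta>) * Dt t = (\<Sum>\<beta>\<in>G. of_int (Rd \<beta>) * monN N t \<beta>)"
    if tb: "t \<in> nodebox N" for t
  proof -
    have e: "SPsum N P1 t + SPsum N R1 t / Dt t = SPsum N P2 t + SPsum N R2 t / Dt t"
      using decomp_eq[OF d1 tb] decomp_eq[OF d2 tb] by simp
    have "SPsum N P1 t - SPsum N P2 t = (SPsum N R2 t - SPsum N R1 t) / Dt t"
      using e by (simp add: diff_divide_distrib algebra_simps)
    then have "(SPsum N P1 t - SPsum N P2 t) * Dt t = SPsum N R2 t - SPsum N R1 t"
      using Dnz tb by (simp add: field_simps)
    moreover have "SPsum N P1 t - SPsum N P2 t = (\<Sum>\<beta>\<in>F. of_int (Q \<beta>) * monN N t \<beta>)"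
      unfolding P1s P2s Q_def by (simp add: sum_subtractf algebra_simps)
    moreover have "SPsum N R2 t - SPsum N R1 t = (\<Sum>\<beta>\<in>G. of_int (Rd \<beta>) * monN N t \<beta>)"
      unfolding R1s R2s Rd_def by (simp add: sum_subtractf algebra_simps)
    ultimately show ?thesis by simp
  qed
  have Fz: "\<beta> \<in> F \<Longrightarrow> \<forall>v. v \<notin> N \<longrightarrow> \<beta> v = 0" for \<beta>
    unfolding F_def using decomp_P[OF d1] decomp_P[OF d2] by blast
  have Gz: "\<beta> \<in> G \<Longrightarrow> \<forall>v. v \<notin> N \<longrightarrow> \<beta> v = 0" for \<beta>
    unfolding G_def using decomp_R[OF d1] decomp_R[OF d2] by blast
  have Qz: "\<forall>\<beta>\<in>F. Q \<beta> = 0"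
  proof (rule ccontr)
    assume "\<not> (\<forall>\<beta>\<in>F. Q \<beta> = 0)"
    then obtain \<beta>1 where b1: "\<beta>1 \<in> F" "Q \<beta>1 \<noteq> 0" by blast
    have "\<not> (\<forall>n\<in>N. \<beta>1 n < 0)"
    proof -
      have "P1 \<beta>1 \<noteq> 0 \<or> P2 \<beta>1 \<noteq> 0" using b1 unfolding Q_def by auto
      then show ?thesis using decomp_P[OF d1] decomp_P[OF d2] by blast
    qed
    then obtain m where mN: "m \<in> N" and bm: "\<beta>1 m \<ge> 0" by (auto simp: not_less)
    define Q' where "Q' = {\<beta>\<in>F. Q \<beta> \<noteq> 0}"
    have fQ': "finite Q'" using fF unfolding Q'_def by simp
    have b1Q: "\<beta>1 \<in> Q'" using b1 unfolding Q'_def by simp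
    define \<mu> where "\<mu> = Max ((\<lambda>\<beta>. \<beta> m) ` Q')"
    have mu_ge: "\<beta> \<in> Q' \<Longrightarrow> \<beta> m \<le> \<mu>" for \<beta> unfolding \<mu>_def using fQ' by simp
    have mu_in: "\<mu> \<in> (\<lambda>\<beta>. \<beta> m) ` Q'" unfolding \<mu>_def using fQ' b1Q by (intro Max_in) auto
    then obtain \<beta>2 where b2: "\<beta>2 \<in> Q'" "\<beta>2 m = \<mu>" by auto
    have mu0: "\<mu> \<ge> 0" using mu_ge[OF b1Q] bm by simp
    have Fb: "\<forall>\<beta>\<in>F. Q \<beta> \<noteq> 0 \<longrightarrow> \<beta> m \<le> \<mu>" using mu_ge unfolding Q'_def by simp
    have Gb: "\<forall>\<beta>\<in>G. Rd \<beta> \<noteq> 0 \<longrightarrow> \<beta> m < (\<Sum>n\<in>N. a n m)"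
    proof (intro ballI impI)
      fix \<beta> assume "\<beta> \<in> G" "Rd \<beta> \<noteq> 0"
      then have "R1 \<beta> \<noteq> 0 \<or> R2 \<beta> \<noteq> 0" unfolding Rd_def by auto
      then have "\<beta> m < A m" using decomp_R[OF d1] decomp_R[OF d2] mN by blast
      then show "\<beta> m < (\<Sum>n\<in>N. a n m)" unfolding Adef by simp
    qed
    have ident': "\<forall>t\<in>nodebox N. (\<Sum>\<beta>\<in>F. of_int (Q \<beta>) * monN N t \<beta>) * (\<Prod>n\<in>N. 1 - monN N t (a n))
                   = (\<Sum>\<beta>\<in>G. of_int (Rd \<beta>) * monN N t \<beta>)"
      using ident unfolding Ddef by blast
    have apm: "\<forall>n\<in>N. a n m > 0" using apos mN by blast
    define F\<mu> where "F\<mu> = {\<beta>\<in>F. Q \<beta> \<noteq> 0 \<and> \<beta> m = \<mu>}"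
    have top: "\<forall>t\<in>nodebox (N - {m}). (\<Sum>\<beta>\<in>F\<mu>. of_int (Q \<beta>) * monN (N - {m}) t \<beta>) = 0"
      unfolding F\<mu>_def using top_coeff_zero[OF fin mN apm fF fG Fb mu0 Gb ident'] by blast
    have inj: "inj_on (rN (N - {m})) F\<mu>"
    proof (rule inj_onI)
      fix x y assume x: "x \<in> F\<mu>" and y: "y \<in> F\<mu>" and eq: "rN (N - {m}) x = rN (N - {m}) y"
      have xm: "x m = y m" using x y unfolding F\<mu>_def by simp
      have zx: "\<forall>v. v \<notin> N \<longrightarrow> x v = 0" and zy: "\<forall>v. v \<notin> N \<longrightarrow> y v = 0"
        using Fz x y unfolding F\<mu>_def by auto
      show "x = y"
      proof
        fix v show "x v = y v"
        proof (cases "v \<in> N - {m}")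
          case True then show ?thesis using fun_cong[OF eq, of v] unfolding rN_def by simp
        next
          case False then show ?thesis using xm zx zy by auto
        qed
      qed
    qed
    have "\<forall>\<beta>\<in>F\<mu>. real_of_int (Q \<beta>) = 0"
      by (rule mli[OF _ _ inj top]) (use fin fF in \<open>auto simp: F\<mu>_def\<close>)
    moreover have "\<beta>2 \<in> F\<mu>" using b2 unfolding F\<mu>_def Q'_def by auto
    ultimately show False using b2 unfolding Q'_def by auto
  qed
  have PP: "P1 = P2"
  proof
    fix \<beta> show "P1 \<beta> = P2 \<beta>"
    proof (cases "\<beta> \<in> F")
      case True then show ?thesis using Qz unfolding Q_def by auto
    next
      case False then show ?thesis unfolding F_def by auto
    qed
  qed
  have G0: "\<forall>t\<in>nodebox N. (\<Sum>\<beta>\<in>G. of_int (Rd \<beta>) * monN N t \<beta>) = 0"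
  proof
    fix t assume tb: "t \<in> nodebox N"
    have "(\<Sum>\<beta>\<in>F. of_int (Q \<beta>) * monN N t \<beta>) = 0"
      by (intro sum.neutral) (use Qz in simp)
    then show "(\<Sum>\<beta>\<in>G. of_int (Rd \<beta>) * monN N t \<beta>) = 0" using ident[OF tb] by simp
  qed
  have injG: "inj_on (rN N) G"
  proof (rule inj_onI)
    fix x y assume x: "x \<in> G" and y: "y \<in> G" and eq: "rN N x = rN N y"
    show "x = y"
    proof
      fix v show "x v = y v"
      proof (cases "v \<in> N")
        case True then show ?thesis using fun_cong[OF eq, of v] unfolding rN_def by simp
      next
        case False then show ?thesis using Gz[OF x] Gz[OF y] by simp
      qed
    qed
  qed
  have Rz: "\<forall>\<beta>\<in>G. real_of_int (Rd \<beta>) = 0"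
    by (rule mli[OF fin fG injG G0])
  have RR: "R1 = R2"
  proof
    fix \<beta> show "R1 \<beta> = R2 \<beta>"
    proof (cases "\<beta> \<in> G")
      case True then show ?thesis using Rz unfolding Rd_def by auto
    next
      case False then show ?thesis unfolding G_def by auto
    qed
  qed
  show ?thesis using PP RR by simp
qed

lemma prod_lt1:
  fixes f :: "'a \<Rightarrow> real"
  assumes "finite S" "S \<noteq> {}" "\<forall>x\<in>S. 0 < f x \<and> f x < 1"
  shows "prod f S < 1"
  using assms
proof (induction S rule: finite_ne_induct)
  case (singleton x) then show ?case by simp
next
  case (insert x S)
  have p: "prod f S < 1" using insert by simp
  have fx: "0 < f x" "f x < 1" using insert.prems by auto
  have h: "f x * prod f S < f x" using mult_strict_left_mono[OF p fx(1)] by (simp only: mult_1_right)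
  have "prod f (insert x S) = f x * prod f S" using insert.hyps by simp
  then show ?case using h fx(2) by linarith
qed

lemma avec_zero: "m \<notin> nodes adj \<Longrightarrow> avec adj e lam n m = 0"
  unfolding avec_def by simp

lemma avec_pos:
  fixes adj :: "'v::finite \<Rightarrow> 'v \<Rightarrow> bool"
  assumes tree: "is_tree adj" and nd: "neg_definite adj e"
    and lam_pos: "\<forall>n\<in>nodes adj. lam n > 0" and n: "n \<in> nodes adj" and m: "m \<in> nodes adj"
  shows "avec adj e lam n m > 0"
  unfolding avec_def using m lam_pos n Estar_pos[OF tree nd, of n m] by simp

lemma Dt_pos:
  fixes adj :: "'v::finite \<Rightarrow> 'v \<Rightarrow> bool"
  assumes tree: "is_tree adj" and nd: "neg_definite adj e" and hn: "nodes adj \<noteq> {}"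
    and lam_pos: "\<forall>n\<in>nodes adj. lam n > 0" and t: "t \<in> nodebox (nodes adj)"
  shows "(\<Prod>n\<in>nodes adj. 1 - monN (nodes adj) t (avec adj e lam n)) > 0"
proof (rule prod_pos)
  fix n assume n: "n \<in> nodes adj"
  have "monN (nodes adj) t (avec adj e lam n) < 1"
    unfolding monN_def
  proof (rule prod_lt1[OF _ hn])
    show "finite (nodes adj)" by simp
    show "\<forall>x\<in>nodes adj. 0 < t x powr real_of_rat (avec adj e lam n x) \<and> t x powr real_of_rat (avec adj e lam n x) < 1"
    proof
      fix x assume x: "x \<in> nodes adj"
      have tx: "0 < t x" "t x < 1" using t x unfolding nodebox_def by auto
      have c: "real_of_rat (avec adj e lam n x) > 0" using avec_pos[OF tree nd lam_pos n x] by simp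
      have "t x powr real_of_rat (avec adj e lam n x) < 1 powr real_of_rat (avec adj e lam n x)"
        by (rule powr_less_mono2[OF c]) (use tx in auto)
      then show "0 < t x powr real_of_rat (avec adj e lam n x) \<and> t x powr real_of_rat (avec adj e lam n x) < 1"
        using tx by simp
    qed
  qed
  then show "0 < 1 - monN (nodes adj) t (avec adj e lam n)" by simp
qed


lemma ex1_from_decomp:
  assumes "\<exists>P R. decomp N A Dt f P R"
    and "\<And>P1 R1 P2 R2. decomp N A Dt f P1 R1 \<Longrightarrow> decomp N A Dt f P2 R2 \<Longrightarrow> P1 = P2 \<and> R1 = R2"
  shows "\<exists>!(P, R). decomp N A Dt f P R"
proof -
  obtain P0 R0 where d0: "decomp N A Dt f P0 R0" using assms(1) by blast
  show ?thesis
  proof (rule ex1I[of _ "(P0, R0)"])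
    show "case (P0, R0) of (P, R) \<Rightarrow> decomp N A Dt f P R" using d0 by simp
  next
    fix y assume y: "case y of (P, R) \<Rightarrow> decomp N A Dt f P R"
    obtain P R where yPR: "y = (P, R)" by (cases y)
    then have "decomp N A Dt f P R" using y by simp
    then show "y = (P0, R0)" using assms(2)[OF _ d0] yPR by simp
  qed
qed

theorem mainTheorem1:
  fixes adj :: "'v::finite \<Rightarrow> 'v \<Rightarrow> bool" and e :: "'v \<Rightarrow> int" and lam :: "'v \<Rightarrow> rat"
  assumes tree: "is_tree adj"
    and negdef: "neg_definite adj e"
    and has_node: "nodes adj \<noteq> {}"
    and lam_pos: "\<forall>n\<in>nodes adj. lam n > 0"
    and known: "\<forall>h\<in>Hgrp adj e. \<exists>(r :: 'v \<Rightarrow> rat) (b :: ('v \<Rightarrow> rat) \<Rightarrow> int).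
                  finite {l. b l \<noteq> 0} \<and>
                  (\<forall>t\<in>nodebox (nodes adj).
                     fred adj e h t = monN (nodes adj) t r
                       * (\<Sum>l\<in>{l. b l \<noteq> 0}. of_int (b l) * monN (nodes adj) t l)
                       / (\<Prod>n\<in>nodes adj. 1 - monN (nodes adj) t (avec adj e lam n)))"
  shows "\<forall>h\<in>Hgrp adj e. \<exists>!(P, R).
           finite {\<beta>. P \<beta> \<noteq> 0} \<and> finite {\<beta>. R \<beta> \<noteq> 0}
         \<and> (\<forall>\<beta>. P \<beta> \<noteq> 0 \<longrightarrow> (\<forall>v. v \<notin> nodes adj \<longrightarrow> \<beta> v = 0) \<and> \<not> (\<forall>n\<in>nodes adj. \<beta> n < 0))
         \<and> (\<forall>\<beta>. R \<beta> \<noteq> 0 \<longrightarrow> (\<forall>v. v \<notin> nodes adj \<longrightarrow> \<beta> v = 0)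
                \<and> (\<forall>n\<in>nodes adj. \<beta> n < (\<Sum>n'\<in>nodes adj. avec adj e lam n' n)))
         \<and> (\<forall>t\<in>nodebox (nodes adj).
              fred adj e h t
                = (\<Sum>\<beta>\<in>{\<beta>. P \<beta> \<noteq> 0}. of_int (P \<beta>) * monN (nodes adj) t \<beta>)
                + (\<Sum>\<beta>\<in>{\<beta>. R \<beta> \<noteq> 0}. of_int (R \<beta>) * monN (nodes adj) t \<beta>)
                  / (\<Prod>n\<in>nodes adj. 1 - monN (nodes adj) t (avec adj e lam n)))"
proof
  fix h assume hH: "h \<in> Hgrp adj e"
  let ?N = "nodes adj"
  let ?A = "\<lambda>m. \<Sum>n'\<in>nodes adj. avec adj e lam n' m"
  let ?Dt = "\<lambda>t. \<Prod>n\<in>nodes adj. 1 - monN (nodes adj) t (avec adj e lam n)"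
  have finN: "finite ?N" by simp
  have apos: "\<forall>n\<in>?N. \<forall>m\<in>?N. avec adj e lam n m > 0" using avec_pos[OF tree negdef lam_pos] by blast
  have azero: "\<forall>n v. v \<notin> ?N \<longrightarrow> avec adj e lam n v = 0" by (simp add: avec_zero)
  have Dnz: "\<forall>t\<in>nodebox ?N. ?Dt t \<noteq> 0"
  proof
    fix t assume "t \<in> nodebox ?N"
    from Dt_pos[OF tree negdef has_node lam_pos this] show "?Dt t \<noteq> 0" by (metis less_irrefl)
  qed
  define \<delta> where "\<delta> = Min ((\<lambda>(n, m). avec adj e lam n m) ` (?N \<times> ?N))"
  have fS: "finite ((\<lambda>(n, m). avec adj e lam n m) ` (?N \<times> ?N))" by simp
  have neS: "(\<lambda>(n, m). avec adj e lam n m) ` (?N \<times> ?N) \<noteq> {}" using has_node by simp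
  have dle: "\<forall>n\<in>?N. \<forall>m\<in>?N. avec adj e lam n m \<ge> \<delta>"
    unfolding \<delta>_def using fS by (auto intro!: Min_le)
  have dpos: "\<delta> > 0"
  proof -
    have "\<delta> \<in> (\<lambda>(n, m). avec adj e lam n m) ` (?N \<times> ?N)" unfolding \<delta>_def by (rule Min_in[OF fS neS])
    then show ?thesis using apos by auto
  qed
  have core: "DEC ?N ?A ?Dt (\<lambda>t. monN ?N t \<gamma> / ?Dt t)" if "\<forall>v. v \<notin> ?N \<longrightarrow> \<gamma> v = 0" for \<gamma>
    by (rule exist_core[OF finN azero dle dpos refl refl Dnz that])
  obtain r :: "'v \<Rightarrow> rat" and b :: "('v \<Rightarrow> rat) \<Rightarrow> int" where fb: "finite {l. b l \<noteq> 0}"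
    and fr: "\<forall>t\<in>nodebox ?N. fred adj e h t = monN ?N t r * (\<Sum>l\<in>{l. b l \<noteq> 0}. of_int (b l) * monN ?N t l) / ?Dt t"
    using known hH by blast
  have fredeq: "\<forall>t\<in>nodebox ?N. (\<Sum>l\<in>{l. b l \<noteq> 0}. of_int (b l) * (monN ?N t (rN ?N (r + l)) / ?Dt t)) = fred adj e h t"
  proof
    fix t assume tb: "t \<in> nodebox ?N"
    have tpos: "\<forall>n\<in>?N. t n > 0" using tb unfolding nodebox_def by auto
    have m: "monN ?N t (rN ?N (r + l)) = monN ?N t r * monN ?N t l" for l
    proof -
      have "monN ?N t (rN ?N (r + l)) = monN ?N t (r + l)" by (rule monN_cong) (simp add: rN_def)
      also have "\<dots> = monN ?N t r * monN ?N t l" by (rule monN_add[OF tpos])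
      finally show ?thesis .
    qed
    show "(\<Sum>l\<in>{l. b l \<noteq> 0}. of_int (b l) * (monN ?N t (rN ?N (r + l)) / ?Dt t)) = fred adj e h t"
      unfolding fr[rule_format, OF tb] m by (simp add: sum_distrib_left sum_divide_distrib mult_ac)
  qed
  have "DEC ?N ?A ?Dt (\<lambda>t. \<Sum>l\<in>{l. b l \<noteq> 0}. of_int (b l) * (monN ?N t (rN ?N (r + l)) / ?Dt t))"
    by (rule DEC_sum[OF fb core]) (simp add: rN_def)
  then have "DEC ?N ?A ?Dt (fred adj e h)" using DEC_cong fredeq by blast
  then have ex: "\<exists>P R. decomp ?N ?A ?Dt (fred adj e h) P R" unfolding DEC_def .
  have "\<exists>!(P, R). decomp ?N ?A ?Dt (fred adj e h) P R"
    by (rule ex1_from_decomp[OF ex decomp_unique[OF finN apos refl refl Dnz]])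
  then show "\<exists>!(P, R).
           finite {\<beta>. P \<beta> \<noteq> 0} \<and> finite {\<beta>. R \<beta> \<noteq> 0}
         \<and> (\<forall>\<beta>. P \<beta> \<noteq> 0 \<longrightarrow> (\<forall>v. v \<notin> nodes adj \<longrightarrow> \<beta> v = 0) \<and> \<not> (\<forall>n\<in>nodes adj. \<beta> n < 0))
         \<and> (\<forall>\<beta>. R \<beta> \<noteq> 0 \<longrightarrow> (\<forall>v. v \<notin> nodes adj \<longrightarrow> \<beta> v = 0)
                \<and> (\<forall>n\<in>nodes adj. \<beta> n < (\<Sum>n'\<in>nodes adj. avec adj e lam n' n)))
         \<and> (\<forall>t\<in>nodebox (nodes adj).
              fred adj e h t
                = (\<Sum>\<beta>\<in>{\<beta>. P \<beta> \<noteq> 0}. of_int (P \<beta>) * monN (nodes adj) t \<beta>)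
                + (\<Sum>\<beta>\<in>{\<beta>. R \<beta> \<noteq> 0}. of_int (R \<beta>) * monN (nodes adj) t \<beta>)
                  / (\<Prod>n\<in>nodes adj. 1 - monN (nodes adj) t (avec adj e lam n)))"
    unfolding decomp_def SPsum_def .
qed

end
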